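(* For any simple graph $G$ whose vertices are among the variables of $S=\mathbb{K}[x_1,\dots,x_n]$, $\mathbb{K}$ a field, we have $\operatorname{sreg}(S/I(G))\le\operatorname{cochord}(G)$.
   Context: A graph is chordal if every induced cycle has length 3, and co-chordal if its complement graph is chordal. The co-chordal cover number $\operatorname{cochord}(G)$ is the minimum number of co-chordal subgraphs of $G$ whose edge sets cover $E(G)$. $I(G)=(xy : \{x,y\}\in E(G))$ is the edge ideal. Stanley regularity: for a squarefree monomial ideal $I\subset S$, a squarefree Stanley decomposition of $S/I$ is a decomposition $S/I=\bigoplus_{i=1}^r u_i\mathbb{K}[Z_i]$ as $\mathbb{K}$-vector spaces, where $Z_i\subseteq\{x_1,\dots,x_n\}$, $u_i$ are (images of) squarefree monomials with $\operatorname{supp}(u_i)\subseteq Z_i$, and each $u_i\mathbb{K}[Z_i]$ is free over $\mathbb{K}[Z_i]$. Its Stanley regularity is $\max_i\deg(u_i)$, and $\operatorname{sreg}(S/I)$ is the minimum over all such decompositions. *)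

theory Defs
  imports Main "HOL-Library.Poly_Mapping"
begin

definition simple_graph_on :: "'v set \<Rightarrow> 'v set set \<Rightarrow> bool" where
  "simple_graph_on V E \<longleftrightarrow> (\<forall>e\<in>E. \<exists>u v. e = {u, v} \<and> u \<noteq> v \<and> u \<in> V \<and> v \<in> V)"

definition adj :: "'v set set \<Rightarrow> 'v \<Rightarrow> 'v \<Rightarrow> bool" where
  "adj E u v \<longleftrightarrow> {u, v} \<in> E"

definition compl_graph :: "'v set \<Rightarrow> 'v set set \<Rightarrow> 'v set set" where
  "compl_graph V E = {{u, v} | u v. u \<in> V \<and> v \<in> V \<and> u \<noteq> v \<and> {u, v} \<notin> E}"

definition induced_cycle :: "'v set \<Rightarrow> 'v set set \<Rightarrow> 'v list \<Rightarrow> bool" where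
  "induced_cycle V E vs \<longleftrightarrow>
     distinct vs \<and> length vs \<ge> 3 \<and> set vs \<subseteq> V \<and>
     (\<forall>i < length vs. adj E (vs ! i) (vs ! ((i + 1) mod length vs))) \<and>
     (\<forall>i < length vs. \<forall>j < length vs. adj E (vs ! i) (vs ! j) \<longrightarrow>
         j = (i + 1) mod length vs \<or> i = (j + 1) mod length vs)"

definition chordal :: "'v set \<Rightarrow> 'v set set \<Rightarrow> bool" where
  "chordal V E \<longleftrightarrow> (\<forall>vs. induced_cycle V E vs \<longrightarrow> length vs = 3)"

definition cochordal :: "'v set \<Rightarrow> 'v set set \<Rightarrow> bool" where
  "cochordal V E \<longleftrightarrow> chordal V (compl_graph V E)"

definition cochord :: "'v set \<Rightarrow> 'v set set \<Rightarrow> nat" where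
  "cochord V E = (LEAST k. \<exists>Hs :: 'v set set list. length Hs = k \<and>
      (\<forall>H \<in> set Hs. H \<subseteq> E \<and> cochordal V H) \<and> \<Union>(set Hs) = E)"

type_synonym 'k mpoly = "(nat \<Rightarrow>\<^sub>0 nat) \<Rightarrow>\<^sub>0 'k"

text \<open>K[Z]: polynomials only involving variables in Z. S = K[x_0..x_(n-1)] is polys_in {..<n}.\<close>
definition polys_in :: "nat set \<Rightarrow> ('k::zero) mpoly set" where
  "polys_in Z = {p. \<forall>m \<in> Poly_Mapping.keys p. Poly_Mapping.keys (m :: nat \<Rightarrow>\<^sub>0 nat) \<subseteq> Z}"

definition var :: "nat \<Rightarrow> ('k::{zero,one}) mpoly" where
  "var i = Poly_Mapping.single (Poly_Mapping.single i 1) 1"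

definition sqfree_mono :: "nat set \<Rightarrow> ('k::{zero,one}) mpoly" where
  "sqfree_mono U = Poly_Mapping.single (\<Sum>i\<in>U. Poly_Mapping.single i 1) 1"

definition edge_ideal :: "nat \<Rightarrow> nat set set \<Rightarrow> ('k::comm_ring_1) mpoly set" where
  "edge_ideal n E = {(\<Sum>e\<in>E. q e * sqfree_mono e) | q. \<forall>e. q e \<in> polys_in {..<n}}"

text \<open>A squarefree Stanley decomposition of S/I is a list of pairs (U_i, Z_i), standing for the
  summand u_i K[Z_i] with u_i = x_(U_i), supp(u_i) = U_i \<subseteq> Z_i \<subseteq> {x_0..x_(n-1)}, such that
  (spanning) S/I is the sum of the subspaces u_i K[Z_i],
  (direct)   the sum is direct,
  (free)     each u_i K[Z_i] is free over K[Z_i], i.e. p \<mapsto> u_i p : K[Z_i] \<rightarrow> S/I is injective.\<close>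
definition stanley_decomp :: "'k itself \<Rightarrow> nat \<Rightarrow> ('k::field) mpoly set \<Rightarrow> (nat set \<times> nat set) list \<Rightarrow> bool" where
  "stanley_decomp _ n I D \<longleftrightarrow>
     (\<forall>i < length D. fst (D!i) \<subseteq> snd (D!i) \<and> snd (D!i) \<subseteq> {..<n}) \<and>
     (\<forall>f \<in> polys_in {..<n}. \<exists>g :: nat \<Rightarrow> 'k mpoly.
         (\<forall>i < length D. g i \<in> polys_in (snd (D!i))) \<and>
         f - (\<Sum>i<length D. sqfree_mono (fst (D!i)) * g i) \<in> I) \<and>
     (\<forall>g :: nat \<Rightarrow> 'k mpoly.
         (\<forall>i < length D. g i \<in> polys_in (snd (D!i))) \<and>
         (\<Sum>i<length D. sqfree_mono (fst (D!i)) * g i) \<in> I \<longrightarrow>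
         (\<forall>i < length D. sqfree_mono (fst (D!i)) * g i \<in> I)) \<and>
     (\<forall>i < length D. \<forall>p \<in> polys_in (snd (D!i)). sqfree_mono (fst (D!i)) * p \<in> I \<longrightarrow> p = 0)"

definition sreg :: "'k itself \<Rightarrow> nat \<Rightarrow> ('k::field) mpoly set \<Rightarrow> nat" where
  "sreg K n I = (LEAST d. \<exists>D. stanley_decomp K n I D \<and> (\<forall>(U, Z) \<in> set D. card U \<le> d))"

end

theory Submission
  imports Defs
begin
lemma adj_sym: "adj C u v = adj C v u" by (simp add: adj_def insert_commute)

lemma sg_adj: assumes "simple_graph_on V C" "adj C u v" shows "u \<noteq> v" "u \<in> V" "v \<in> V"
proof -
  from assms obtain a b where e: "{u,v} = {a,b}" "a \<noteq> b" "a\<in>V" "b\<in>V"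
    unfolding simple_graph_on_def adj_def by blast
  have "u \<in> {a,b}" "v \<in> {a,b}" using e(1) by (metis insertI1 insert_commute)+
  then show "u \<in> V" "v \<in> V" using e by auto
  show "u \<noteq> v" using e by (metis doubleton_eq_iff)
qed

definition rstr :: "'v set set \<Rightarrow> 'v set \<Rightarrow> 'v set set" where "rstr C W = {e \<in> C. e \<subseteq> W}"

lemma adj_rstr: "adj (rstr C W) u v \<longleftrightarrow> adj C u v \<and> u \<in> W \<and> v \<in> W"
  by (auto simp: adj_def rstr_def)

lemma sg_rstr: assumes "simple_graph_on V C" shows "simple_graph_on W (rstr C W)"
  unfolding simple_graph_on_def
proof
  fix e assume "e \<in> rstr C W"
  then have "e \<in> C" "e \<subseteq> W" by (auto simp: rstr_def)
  then obtain u v where "e = {u,v}" "u \<noteq> v" using assms unfolding simple_graph_on_def by blast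
  then show "\<exists>u v. e = {u, v} \<and> u \<noteq> v \<and> u \<in> W \<and> v \<in> W" using \<open>e \<subseteq> W\<close> by blast
qed

lemma chordal_rstr: assumes "chordal V C" "W \<subseteq> V" shows "chordal W (rstr C W)"
  unfolding chordal_def
proof (intro allI impI)
  fix vs assume h: "induced_cycle W (rstr C W) vs"
  have sub: "\<And>i. i < length vs \<Longrightarrow> vs ! i \<in> W" using h unfolding induced_cycle_def
    by (meson nth_mem subsetD)
  have "induced_cycle V C vs" unfolding induced_cycle_def
  proof (intro conjI allI impI)
    show "distinct vs" "3 \<le> length vs" using h by (simp_all add: induced_cycle_def)
    show "set vs \<subseteq> V" using h assms(2) by (auto simp: induced_cycle_def)
    fix i assume i: "i < length vs"
    show "adj C (vs ! i) (vs ! ((i + 1) mod length vs))" using h i unfolding induced_cycle_def adj_rstr by blast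
    fix j assume j: "j < length vs" and a: "adj C (vs ! i) (vs ! j)"
    have "adj (rstr C W) (vs ! i) (vs ! j)" using a sub i j adj_rstr by metis
    then show "j = (i + 1) mod length vs \<or> i = (j + 1) mod length vs" using h i j unfolding induced_cycle_def by blast
  qed
  then show "length vs = 3" using assms(1) by (simp add: chordal_def)
qed

lemma cycle_from_path:
  assumes sg: "simple_graph_on V C" and ch: "chordal V C"
  and d: "distinct P" and l: "length P \<ge> 3" and PV: "set P \<subseteq> V"
  and cons: "\<And>i. Suc i < length P \<Longrightarrow> adj C (P!i) (P!Suc i)"
  and ind: "\<And>i j. Suc i < j \<Longrightarrow> j < length P \<Longrightarrow> \<not> adj C (P!i) (P!j)"
  and b: "b \<in> V" "b \<notin> set P" "adj C b (P!0)" "adj C b (P!(length P - 1))"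
  and bi: "\<And>i. 0 < i \<Longrightarrow> Suc i < length P \<Longrightarrow> \<not> adj C b (P!i)"
  shows False
proof -
  define vs where "vs = P @ [b]"
  define L where "L = length vs"
  have L: "L = Suc (length P)" by (simp add: L_def vs_def)
  have vsP: "\<And>i. i < length P \<Longrightarrow> vs!i = P!i" by (simp add: vs_def nth_append)
  have vsb: "vs ! length P = b" by (simp add: vs_def)
  have irr: "\<And>u. \<not> adj C u u" using sg_adj[OF sg] by blast
  have c1: "\<forall>i < L. adj C (vs ! i) (vs ! ((i + 1) mod L))"
  proof (intro allI impI)
    fix i assume "i < L"
    then consider "Suc i < length P" | "Suc i = length P" | "i = length P" using L by linarith
    then show "adj C (vs ! i) (vs ! ((i + 1) mod L))"
    proof cases
      case 1 then show ?thesis using cons[OF 1] vsP L by simp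
    next
      case 2
      then have "(i+1) mod L = length P" using L by simp
      then show ?thesis using 2 vsP vsb b(4) adj_sym
        by (metis diff_Suc_1 lessI)
    next
      case 3
      then have "(i+1) mod L = 0" using L by simp
      moreover have "vs!0 = P!0" using vsP[of 0] l by (metis gr0I le_zero_eq numeral_3_eq_3 zero_less_Suc)
      ultimately show ?thesis using 3 vsb b(3) by simp
    qed
  qed
  have c2: "\<forall>i < L. \<forall>j < L. adj C (vs ! i) (vs ! j) \<longrightarrow> j = (i + 1) mod L \<or> i = (j + 1) mod L"
  proof (intro allI impI)
    fix i j assume i: "i < L" and j: "j < L" and a: "adj C (vs ! i) (vs ! j)"
    consider "i < length P" "j < length P" | "i = length P" "j < length P" | "i < length P" "j = length P"
      | "i = length P" "j = length P" using i j L by linarith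
    then show "j = (i + 1) mod L \<or> i = (j + 1) mod L"
    proof cases
      case 1
      then have a': "adj C (P!i) (P!j)" using a vsP by simp
      have "i \<noteq> j" using a' irr by auto
      moreover have "\<not> Suc i < j" using ind a' 1 by blast
      moreover have "\<not> Suc j < i" using ind a' 1 adj_sym by metis
      ultimately have "j = Suc i \<or> i = Suc j" by linarith
      then show ?thesis using 1 L by auto
    next
      case 2
      then have a': "adj C b (P!j)" using a vsP vsb by simp
      then have "j = 0 \<or> Suc j = length P" using bi[of j] 2 by linarith
      then show ?thesis using 2 L by auto
    next
      case 3
      then have a': "adj C b (P!i)" using a vsP vsb adj_sym by metis
      then have "i = 0 \<or> Suc i = length P" using bi[of i] 3 by linarith
      then show ?thesis using 3 L by auto
    next
      case 4 then show ?thesis using a vsb irr by simp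
    qed
  qed
  have "induced_cycle V C vs"
    unfolding induced_cycle_def using c1 c2 d b PV l unfolding L_def by (auto simp: vs_def)
  then have "length vs = 3" using ch by (simp add: chordal_def)
  then show False using l by (simp add: vs_def)
qed

definition pth :: "'v set set \<Rightarrow> 'v set \<Rightarrow> 'v \<Rightarrow> 'v \<Rightarrow> 'v list \<Rightarrow> bool" where
 "pth C A x y P \<longleftrightarrow> length P \<ge> 2 \<and> P!0 = x \<and> P!(length P - 1) = y \<and>
    (\<forall>i. Suc i < length P \<longrightarrow> adj C (P!i) (P!Suc i)) \<and> (\<forall>i. 0 < i \<longrightarrow> Suc i < length P \<longrightarrow> P!i \<in> A)"

lemma shortcut:
  assumes p: "pth C A x y P" and ij: "i < j" "j \<le> length P" and len: "2 \<le> Suc i + (length P - j)"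
    and a: "j < length P \<Longrightarrow> adj C (P!i) (P!j)" and e: "j = length P \<Longrightarrow> P!i = y"
  shows "pth C A x y (take (Suc i) P @ drop j P)"
proof -
  define Q where "Q = take (Suc i) P @ drop j P"
  have lQ: "length Q = Suc i + (length P - j)" using ij by (simp add: Q_def)
  have Q1: "\<And>t. t < Suc i \<Longrightarrow> Q!t = P!t" using ij by (simp add: Q_def nth_append)
  have Q2: "\<And>t. Suc i \<le> t \<Longrightarrow> t < length Q \<Longrightarrow> Q!t = P!(t - Suc i + j)" using ij
    by (simp add: Q_def nth_append) (metis add.commute add_diff_assoc2)
  have P: "length P \<ge> 2" "P!0 = x" "P!(length P - 1) = y" "\<And>i. Suc i < length P \<Longrightarrow> adj C (P!i) (P!Suc i)"
    "\<And>i. 0 < i \<Longrightarrow> Suc i < length P \<Longrightarrow> P!i \<in> A" using p by (auto simp: pth_def)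
  have "Q!0 = x" using Q1[of 0] P(2) by simp
  moreover have "Q!(length Q - 1) = y"
  proof (cases "j < length P")
    case True
    then have "Q!(length Q - 1) = P!(length Q - 1 - Suc i + j)" using Q2 lQ by simp
    also have "length Q - 1 - Suc i + j = length P - 1" using lQ True ij by simp
    finally show ?thesis using P(3) by simp
  next
    case False
    then have "j = length P" using ij by simp
    then show ?thesis using Q1[of i] e lQ by simp
  qed
  moreover have "\<forall>t. Suc t < length Q \<longrightarrow> adj C (Q!t) (Q!Suc t)"
  proof (intro allI impI)
    fix t assume t: "Suc t < length Q"
    consider "Suc t < Suc i" | "t = i" | "Suc i \<le> t" by linarith
    then show "adj C (Q!t) (Q!Suc t)"
    proof cases
      case 1 then show ?thesis using Q1 P(4)[of t] ij by simp
    next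
      case 2
      then have "j < length P" using t lQ by simp
      then show ?thesis using 2 Q1[of i] Q2[of "Suc i"] a t by simp
    next
      case 3
      have "Suc (t - Suc i + j) < length P" using t lQ 3 by simp
      have e: "Suc (t - Suc i + j) = Suc t - Suc i + j" using 3 by simp
      have q1: "Q!t = P!(t - Suc i + j)" using Q2 3 t by simp
      have q2: "Q!Suc t = P!(Suc (t - Suc i + j))" using Q2[of "Suc t"] 3 t e by simp
      show ?thesis unfolding q1 q2 by (rule P(4)) fact
    qed
  qed
  moreover have "\<forall>t. 0 < t \<longrightarrow> Suc t < length Q \<longrightarrow> Q!t \<in> A"
  proof (intro allI impI)
    fix t assume t: "0 < t" "Suc t < length Q"
    show "Q!t \<in> A"
    proof (cases "t < Suc i")
      case True
      have "Suc t < length P" using t True lQ ij by linarith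
      then show ?thesis using True Q1 P(5) t by simp
    next
      case False
      have "Suc (t - Suc i + j) < length P" using t lQ False by simp
      then show ?thesis using False Q2[of t] t P(5)[of "t - Suc i + j"] ij by simp
    qed
  qed
  ultimately show ?thesis using len lQ unfolding pth_def Q_def[symmetric] by simp
qed

lemma shortest_path:
  assumes p: "pth C A x y P" and xy: "x \<noteq> y" "\<not> adj C x y" and sg: "simple_graph_on V C"
  shows "\<exists>P. pth C A x y P \<and> distinct P \<and> length P \<ge> 3 \<and>
     (\<forall>i j. Suc i < j \<longrightarrow> j < length P \<longrightarrow> \<not> adj C (P!i) (P!j))"
proof -
  obtain P0 where p0: "pth C A x y P0" and mn: "\<And>Q. pth C A x y Q \<Longrightarrow> length P0 \<le> length Q"
    using ex_has_least_nat[of "pth C A x y" P length] p by blast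
  have P: "length P0 \<ge> 2" "P0!0 = x" "P0!(length P0 - 1) = y" "\<And>i. Suc i < length P0 \<Longrightarrow> adj C (P0!i) (P0!Suc i)"
    using p0 by (auto simp: pth_def)
  have d: "distinct P0"
    unfolding distinct_conv_nth
  proof (intro allI impI)
    fix i j assume ij: "i < length P0" "j < length P0" "i \<noteq> j"
    show "P0 ! i \<noteq> P0 ! j"
    proof
      assume eq: "P0 ! i = P0 ! j"
      have "\<exists>i j. i < j \<and> j < length P0 \<and> P0!i = P0!j" using ij eq
        by (metis linorder_neqE_nat)
      then obtain i j where ij: "i < j" "j < length P0" "P0!i = P0!j" by blast
      have len: "2 \<le> Suc i + (length P0 - Suc j)"
      proof (rule ccontr)
        assume "\<not> ?thesis"
        then have "i = 0" "Suc j = length P0" using ij by linarith+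
        then show False using ij P xy by (metis diff_Suc_1)
      qed
      have "pth C A x y (take (Suc i) P0 @ drop (Suc j) P0)"
        apply (rule shortcut[OF p0])
        using ij len P by (auto, metis diff_Suc_1)
      then have "length P0 \<le> Suc i + (length P0 - Suc j)" using mn ij by fastforce
      then show False using ij by linarith
    qed
  qed
  have l3: "length P0 \<ge> 3"
  proof (rule ccontr)
    assume "\<not> ?thesis"
    then have "length P0 = 2" using P by linarith
    then show False using P(2,3) P(4)[of 0] xy by simp
  qed
  have ch: "\<forall>i j. Suc i < j \<longrightarrow> j < length P0 \<longrightarrow> \<not> adj C (P0!i) (P0!j)"
  proof (intro allI impI notI)
    fix i j assume ij: "Suc i < j" "j < length P0" and a: "adj C (P0!i) (P0!j)"
    have "pth C A x y (take (Suc i) P0 @ drop j P0)"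
      by (rule shortcut[OF p0]) (use ij a in auto)
    then have "length P0 \<le> Suc i + (length P0 - j)" using mn ij by fastforce
    then show False using ij by linarith
  qed
  show ?thesis using p0 d l3 ch by blast
qed

lemma rtranclp_walk:
  assumes "R\<^sup>*\<^sup>* u v" and R: "\<And>a b. R a b \<Longrightarrow> adj C a b"
  shows "\<exists>Q. Q \<noteq> [] \<and> Q!0 = u \<and> Q!(length Q - 1) = v \<and> (\<forall>i. Suc i < length Q \<longrightarrow> adj C (Q!i) (Q!Suc i))
     \<and> set Q \<subseteq> {w. R\<^sup>*\<^sup>* u w}"
  using assms(1)
proof (induction rule: rtranclp_induct)
  case base
  then show ?case by (intro exI[of _ "[u]"]) auto
next
  case (step y z)
  then obtain Q where Q: "Q \<noteq> []" "Q!0 = u" "Q!(length Q - 1) = y"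
    "\<forall>i. Suc i < length Q \<longrightarrow> adj C (Q!i) (Q!Suc i)" "set Q \<subseteq> {w. R\<^sup>*\<^sup>* u w}" by blast
  have a: "\<forall>i. Suc i < length (Q @ [z]) \<longrightarrow> adj C ((Q @ [z])!i) ((Q @ [z])!Suc i)"
  proof (intro allI impI)
    fix i assume i: "Suc i < length (Q @ [z])"
    show "adj C ((Q @ [z])!i) ((Q @ [z])!Suc i)"
    proof (cases "Suc i < length Q")
      case True then show ?thesis using Q(4) by (simp add: nth_append)
    next
      case False
      then have "i = length Q - 1" using i by simp
      then show ?thesis using Q(1,3) R step(2) False by (simp add: nth_append)
    qed
  qed
  show ?case
    apply (rule exI[of _ "Q @ [z]"])
    using Q a step by (auto simp: nth_append)
qed

definition clique :: "'v set set \<Rightarrow> 'v set \<Rightarrow> bool" where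
  "clique C K \<longleftrightarrow> (\<forall>u\<in>K. \<forall>v\<in>K. u \<noteq> v \<longrightarrow> adj C u v)"
definition simplicial :: "'v set set \<Rightarrow> 'v \<Rightarrow> bool" where
  "simplicial C x \<longleftrightarrow> clique C {u. adj C x u}"

lemma pth_set: assumes "pth C A x y P" shows "set P \<subseteq> insert x (insert y A)"
proof
  fix z assume "z \<in> set P"
  then obtain i where i: "i < length P" "P!i = z" by (auto simp: in_set_conv_nth)
  have p: "length P \<ge> 2" "P!0 = x" "P!(length P - 1) = y" "\<And>i. 0 < i \<Longrightarrow> Suc i < length P \<Longrightarrow> P!i \<in> A"
    using assms by (auto simp: pth_def)
  consider "i = 0" | "i = length P - 1" | "0 < i" "Suc i < length P" using i by linarith
  then show "z \<in> insert x (insert y A)" using p i by cases auto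
qed

lemma T_step:
  assumes sg: "simple_graph_on V C" and ch: "chordal V C"
  and IH: "\<And>W C' K. W \<subset> V \<Longrightarrow> simple_graph_on W C' \<Longrightarrow> chordal W C' \<Longrightarrow> K \<subseteq> W \<Longrightarrow> clique C' K
      \<Longrightarrow> W - K \<noteq> {} \<Longrightarrow> \<exists>x\<in>W-K. simplicial C' x"
  and ab: "a \<in> V" "b \<in> V" "a \<noteq> b" "\<not> adj C a b"
  shows "\<exists>x\<in>V. x \<noteq> b \<and> \<not> adj C x b \<and> simplicial C x"
proof -
  define W where "W = V - insert b {u. adj C u b}"
  define R where "R = (\<lambda>u v. adj C u v \<and> u \<in> W \<and> v \<in> W)"
  define A where "A = {v. R\<^sup>*\<^sup>* a v}"
  define S where "S = {s \<in> V. s \<notin> A \<and> (\<exists>u\<in>A. adj C s u)}"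
  have aW: "a \<in> W" using ab by (auto simp: W_def)
  have AW: "A \<subseteq> W"
  proof
    fix v assume "v \<in> A" then have "R\<^sup>*\<^sup>* a v" by (simp add: A_def)
    then show "v \<in> W" using aW by (induction rule: rtranclp_induct) (auto simp: R_def)
  qed
  have WV: "W \<subseteq> V" by (auto simp: W_def)
  have aA: "a \<in> A" by (simp add: A_def)
  have irr: "\<And>u. \<not> adj C u u" using sg_adj[OF sg] by blast
  have SN: "adj C s b" if s: "s \<in> S" for s
  proof -
    obtain u where u: "u \<in> A" "adj C s u" "s \<in> V" "s \<notin> A" using s by (auto simp: S_def)
    have "s \<notin> W"
    proof
      assume "s \<in> W"
      then have "R u s" using u AW adj_sym[of C s u] by (auto simp: R_def)
      then have "s \<in> A" using u(1) by (auto simp: A_def)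
      then show False using u by simp
    qed
    then have "s = b \<or> adj C s b" using u(3) by (auto simp: W_def)
    moreover have "s \<noteq> b"
    proof
      assume "s = b"
      then have "adj C u b" using u adj_sym by metis
      then show False using u(1) AW by (auto simp: W_def)
    qed
    ultimately show ?thesis by simp
  qed
  have Rsym: "R u v = R v u" for u v by (auto simp: R_def adj_sym)
  have Rconv: "R\<^sup>*\<^sup>* u v \<Longrightarrow> R\<^sup>*\<^sup>* v u" for u v
  proof (induction rule: rtranclp_induct)
    case base then show ?case by simp
  next
    case (step y z) then show ?case
      by (metis Rsym converse_rtranclp_into_rtranclp)
  qed
  have clS: "clique C S"
    unfolding clique_def
  proof (intro ballI impI)
    fix s1 s2 assume s: "s1 \<in> S" "s2 \<in> S" "s1 \<noteq> s2"
    show "adj C s1 s2"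
    proof (rule ccontr)
      assume na: "\<not> adj C s1 s2"
      obtain u1 where u1: "u1 \<in> A" "adj C s1 u1" using s by (auto simp: S_def)
      obtain u2 where u2: "u2 \<in> A" "adj C s2 u2" using s by (auto simp: S_def)
      have r1: "R\<^sup>*\<^sup>* a u1" "R\<^sup>*\<^sup>* a u2" using u1 u2 by (auto simp: A_def)
      have r12: "R\<^sup>*\<^sup>* u1 u2" using Rconv[OF r1(1)] r1(2) by (rule rtranclp_trans)
      have Radj: "\<And>a b. R a b \<Longrightarrow> adj C a b" by (simp add: R_def)
      obtain Q where Q: "Q \<noteq> []" "Q!0 = u1" "Q!(length Q - 1) = u2"
        "\<forall>i. Suc i < length Q \<longrightarrow> adj C (Q!i) (Q!Suc i)" "set Q \<subseteq> {w. R\<^sup>*\<^sup>* u1 w}"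
        using rtranclp_walk[OF r12 Radj] by blast
      have QA: "set Q \<subseteq> A" using Q(5) r1(1) unfolding A_def by (blast intro: rtranclp_trans)
      define P where "P = s1 # Q @ [s2]"
      have lP: "length P = length Q + 2" by (simp add: P_def)
      have sA: "s1 \<notin> A" "s2 \<notin> A" using s by (auto simp: S_def)
      have pP: "pth C A s1 s2 P" unfolding pth_def
      proof (intro conjI allI impI)
        show "2 \<le> length P" "P!0 = s1" "P!(length P - 1) = s2" by (auto simp: P_def nth_append)
        fix i
        assume i: "Suc i < length P"
        consider "i = 0" | "0 < i" "Suc i < length Q + 1" | "i = length Q" using i lP by linarith
        then show "adj C (P!i) (P!Suc i)"
        proof cases
          case 1 then show ?thesis using Q u1 by (simp add: P_def nth_append)
        next
          case 2
          then have "P!i = Q!(i - 1)" "P!Suc i = Q!Suc (i - 1)" by (auto simp: P_def nth_append)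
          moreover have "Suc (i - 1) < length Q" using 2 by simp
          ultimately show ?thesis using Q(4) by simp
        next
          case 3
          then have "P!i = Q!(length Q - 1)" "P!Suc i = s2" using Q(1) by (auto simp: P_def nth_append)
          then show ?thesis using Q(3) u2 adj_sym by metis
        qed
      next
        fix i assume i: "0 < i" "Suc i < length P"
        then have "P!i = Q!(i - 1)" "i - 1 < length Q" using lP by (auto simp: P_def nth_append)
        then show "P!i \<in> A" using QA by (metis nth_mem subsetD)
      qed
      obtain P' where P': "pth C A s1 s2 P'" "distinct P'" "length P' \<ge> 3"
        "\<forall>i j. Suc i < j \<longrightarrow> j < length P' \<longrightarrow> \<not> adj C (P'!i) (P'!j)"
        using shortest_path[OF pP s(3) na sg] by blast
      have p': "P'!0 = s1" "P'!(length P' - 1) = s2" "\<And>i. Suc i < length P' \<Longrightarrow> adj C (P'!i) (P'!Suc i)"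
        "\<And>i. 0 < i \<Longrightarrow> Suc i < length P' \<Longrightarrow> P'!i \<in> A"
        using P'(1) by (auto simp: pth_def)
      have sV: "s1 \<in> V" "s2 \<in> V" using s by (auto simp: S_def)
      have setP: "set P' \<subseteq> insert s1 (insert s2 A)" using pth_set[OF P'(1)] .
      have b1: "adj C b s1" "adj C b s2" using SN s adj_sym by metis+
      have bA: "b \<notin> A" using AW by (auto simp: W_def)
      show False
      proof (rule cycle_from_path[OF sg ch P'(2,3)])
        show "set P' \<subseteq> V" using setP sV AW WV by blast
        show "\<And>i. Suc i < length P' \<Longrightarrow> adj C (P'!i) (P'!Suc i)" by (rule p'(3))
        show "\<And>i j. Suc i < j \<Longrightarrow> j < length P' \<Longrightarrow> \<not> adj C (P'!i) (P'!j)" using P'(4) by blast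
        show "b \<in> V" by (rule ab(2))
        show "b \<notin> set P'" using setP bA b1 irr by blast
        show "adj C b (P'!0)" "adj C b (P'!(length P' - 1))" using b1 p' by simp_all
        show "\<And>i. 0 < i \<Longrightarrow> Suc i < length P' \<Longrightarrow> \<not> adj C b (P'!i)"
        proof
          fix i assume i: "0 < i" "Suc i < length P'" and a: "adj C b (P'!i)"
          have "P'!i \<in> W" using p'(4)[OF i] AW by blast
          then show False using a adj_sym[of C b "P'!i"] by (auto simp: W_def)
        qed
      qed
    qed
  qed
  define W' where "W' = A \<union> S"
  define C' where "C' = rstr C W'"
  have SV: "S \<subseteq> V" by (auto simp: S_def)
  have bW': "b \<notin> W'" using SN irr AW by (auto simp: W'_def W_def)
  have W'V: "W' \<subset> V" using AW WV SV bW' ab(2) by (auto simp: W'_def)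
  have "\<exists>x\<in>W'-S. simplicial C' x"
  proof (rule IH[OF W'V])
    show "simple_graph_on W' C'" unfolding C'_def by (rule sg_rstr[OF sg])
    show "chordal W' C'" unfolding C'_def by (rule chordal_rstr[OF ch]) (use W'V in auto)
    show "S \<subseteq> W'" by (auto simp: W'_def)
    show "clique C' S" using clS by (auto simp: clique_def C'_def adj_rstr W'_def)
    show "W' - S \<noteq> {}" using aA by (auto simp: W'_def S_def)
  qed
  then obtain x where x: "x \<in> A" "simplicial C' x" by (auto simp: W'_def)
  have nb: "u \<in> W'" if "adj C x u" for u
  proof -
    have "u \<in> V" using sg_adj(3)[OF sg that] .
    then show ?thesis using that x(1) adj_sym[of C x u] by (auto simp: W'_def S_def)
  qed
  have "simplicial C x"
    unfolding simplicial_def clique_def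
  proof (intro ballI impI)
    fix u w assume "u \<in> {u. adj C x u}" "w \<in> {u. adj C x u}" "u \<noteq> w"
    then have "adj C' x u" "adj C' x w" "u \<noteq> w" using nb x(1) by (auto simp: C'_def adj_rstr W'_def)
    then have "adj C' u w" using x(2) by (auto simp: simplicial_def clique_def)
    then show "adj C u w" by (simp add: C'_def adj_rstr)
  qed
  moreover have "x \<in> W" using x AW by blast
  ultimately show ?thesis using adj_sym by (auto simp: W_def)
qed

lemma Q_of_T:
  assumes sg: "simple_graph_on V C"
  and T: "\<And>a b. a\<in>V \<Longrightarrow> b\<in>V \<Longrightarrow> a\<noteq>b \<Longrightarrow> \<not>adj C a b \<Longrightarrow> \<exists>x\<in>V. x\<noteq>b \<and> \<not>adj C x b \<and> simplicial C x"
  and K: "K \<subseteq> V" "clique C K" "V - K \<noteq> {}"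
  shows "\<exists>x\<in>V-K. simplicial C x"
proof (cases "\<forall>u\<in>V. \<forall>w\<in>V. u\<noteq>w \<longrightarrow> adj C u w")
  case True
  obtain v where v: "v \<in> V - K" using K by blast
  have "simplicial C v" unfolding simplicial_def clique_def
    using True sg_adj[OF sg] by blast
  then show ?thesis using v by blast
next
  case False
  then obtain a b where ab: "a\<in>V" "b\<in>V" "a\<noteq>b" "\<not>adj C a b" by blast
  obtain x where x: "x\<in>V" "x\<noteq>b" "\<not>adj C x b" "simplicial C x" using T[OF ab] by blast
  obtain y where y: "y\<in>V" "y\<noteq>x" "\<not>adj C y x" "simplicial C y"
    using T[OF ab(2) x(1)] x adj_sym by metis
  show ?thesis
  proof (cases "x \<in> K")
    case True
    then have "y \<notin> K" using K(2) y by (auto simp: clique_def)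
    then show ?thesis using y by blast
  next
    case False then show ?thesis using x by blast
  qed
qed

lemma simplicial_exists:
  "finite V \<Longrightarrow> simple_graph_on V C \<Longrightarrow> chordal V C \<Longrightarrow> K \<subseteq> V \<Longrightarrow> clique C K \<Longrightarrow> V - K \<noteq> {}
   \<Longrightarrow> \<exists>x\<in>V-K. simplicial C x"
proof (induction V arbitrary: C K rule: finite_psubset_induct)
  case (psubset V)
  show ?case
  proof (rule Q_of_T[OF psubset.prems(1) _ psubset.prems(3-5)])
    fix a b assume "a\<in>V" "b\<in>V" "a\<noteq>b" "\<not>adj C a b"
    then show "\<exists>x\<in>V. x\<noteq>b \<and> \<not>adj C x b \<and> simplicial C x"
      using T_step[OF psubset.prems(1,2) psubset.IH] by blast
  qed
qed

lemma peo:
  "finite V \<Longrightarrow> simple_graph_on V C \<Longrightarrow> chordal V C \<Longrightarrow>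
   \<exists>r::'v\<Rightarrow>nat. inj_on r V \<and> (\<forall>v\<in>V. \<forall>u w. adj C v u \<longrightarrow> adj C v w \<longrightarrow> r v < r u \<longrightarrow> r v < r w \<longrightarrow> u \<noteq> w \<longrightarrow> adj C u w)"
proof (induction V arbitrary: C rule: finite_psubset_induct)
  case (psubset V)
  show ?case
  proof (cases "V = {}")
    case True then show ?thesis by auto
  next
    case False
    obtain s where s: "s \<in> V" "simplicial C s"
      using simplicial_exists[OF psubset.hyps psubset.prems, of "{}"] False by (auto simp: clique_def)
    define V' where "V' = V - {s}"
    have VV': "V' \<subset> V" using s by (auto simp: V'_def)
    obtain r' :: "'v \<Rightarrow> nat" where r': "inj_on r' V'"
      "\<forall>v\<in>V'. \<forall>u w. adj (rstr C V') v u \<longrightarrow> adj (rstr C V') v w \<longrightarrow> r' v < r' u \<longrightarrow> r' v < r' w \<longrightarrow> u \<noteq> w \<longrightarrow> adj (rstr C V') u w"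
      using psubset.IH[OF VV' sg_rstr[OF psubset.prems(1)] chordal_rstr[OF psubset.prems(2) psubset_imp_subset[OF VV']]] by blast
    define r where "r = (\<lambda>v. if v = s then 0 else Suc (r' v))"
    have "inj_on r V" using r'(1) by (auto simp: inj_on_def r_def V'_def)
    moreover have "\<forall>v\<in>V. \<forall>u w. adj C v u \<longrightarrow> adj C v w \<longrightarrow> r v < r u \<longrightarrow> r v < r w \<longrightarrow> u \<noteq> w \<longrightarrow> adj C u w"
    proof (intro ballI allI impI)
      fix v u w assume v: "v \<in> V" and a: "adj C v u" "adj C v w" "r v < r u" "r v < r w" "u \<noteq> w"
      show "adj C u w"
      proof (cases "v = s")
        case True then show ?thesis using s a(1,2,5) unfolding simplicial_def clique_def by blast
      next
        case False
        have us: "u \<noteq> s" "w \<noteq> s" using a(3,4) by (auto simp: r_def split: if_splits)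
        have "u \<in> V" "w \<in> V" using sg_adj[OF psubset.prems(1)] a by blast+
        then have in': "u \<in> V'" "w \<in> V'" "v \<in> V'" using us False v by (auto simp: V'_def)
        have lt: "r' v < r' u" "r' v < r' w" using a(3,4) us False by (simp_all add: r_def)
        have aa: "adj (rstr C V') v u" "adj (rstr C V') v w" using a(1,2) in' by (simp_all add: adj_rstr)
        have "adj (rstr C V') u w"
          using r'(2) in'(3) aa lt a(5) by blast
        then show ?thesis by (simp add: adj_rstr)
      qed
    qed
    ultimately show ?thesis by blast
  qed
qed

definition ind :: "nat set \<Rightarrow> (nat \<Rightarrow>\<^sub>0 nat)" where
  "ind U = (\<Sum>i\<in>U. Poly_Mapping.single i 1)"

lemma sqfree_mono_ind: "sqfree_mono U = Poly_Mapping.single (ind U) 1"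
  by (simp add: sqfree_mono_def ind_def)

lemma lookup_ind: "finite U \<Longrightarrow> Poly_Mapping.lookup (ind U) i = (if i \<in> U then 1 else 0)"
  by (simp add: ind_def Poly_Mapping.lookup_sum Poly_Mapping.lookup_single when_def)

lemma keys_ind: "finite U \<Longrightarrow> Poly_Mapping.keys (ind U) = U"
  by (auto simp: in_keys_iff lookup_ind split: if_splits)

lemma keys_plus_nat: "Poly_Mapping.keys ((a::'x \<Rightarrow>\<^sub>0 nat) + b) = Poly_Mapping.keys a \<union> Poly_Mapping.keys b"
  by (auto simp: in_keys_iff Poly_Mapping.lookup_add)

lemma keys_minus_nat: "Poly_Mapping.keys ((a::'x \<Rightarrow>\<^sub>0 nat) - b) \<subseteq> Poly_Mapping.keys a"
  by (auto simp: in_keys_iff Poly_Mapping.lookup_minus)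

lemma ind_add_diff: "finite U \<Longrightarrow> U \<subseteq> Poly_Mapping.keys m \<Longrightarrow> ind U + (m - ind U) = m"
  by (rule poly_mapping_eqI) (auto simp: Poly_Mapping.lookup_add Poly_Mapping.lookup_minus lookup_ind in_keys_iff)

lemma poly_expand: "p = (\<Sum>m\<in>Poly_Mapping.keys p. Poly_Mapping.single m (Poly_Mapping.lookup p m))"
proof (rule poly_mapping_eqI)
  fix k
  show "Poly_Mapping.lookup p k = Poly_Mapping.lookup (\<Sum>m\<in>Poly_Mapping.keys p. Poly_Mapping.single m (Poly_Mapping.lookup p m)) k"
    by (simp add: Poly_Mapping.lookup_sum Poly_Mapping.lookup_single when_def in_keys_iff)
qed

lemma mult_single_expand:
  fixes p :: "('a::cancel_comm_monoid_add) \<Rightarrow>\<^sub>0 ('k::comm_semiring_1)"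
  shows "Poly_Mapping.single u c * p = (\<Sum>m\<in>Poly_Mapping.keys p. Poly_Mapping.single (u + m) (c * Poly_Mapping.lookup p m))"
proof -
  have "Poly_Mapping.single u c * p = Poly_Mapping.single u c * (\<Sum>m\<in>Poly_Mapping.keys p. Poly_Mapping.single m (Poly_Mapping.lookup p m))"
    using poly_expand[of p] by simp
  also have "\<dots> = (\<Sum>m\<in>Poly_Mapping.keys p. Poly_Mapping.single (u + m) (c * Poly_Mapping.lookup p m))"
    by (simp add: sum_distrib_left mult_single)
  finally show ?thesis .
qed

lemma lookup_single_mult:
  fixes p :: "('a::cancel_comm_monoid_add) \<Rightarrow>\<^sub>0 ('k::comm_semiring_1)"
  shows "Poly_Mapping.lookup (Poly_Mapping.single u c * p) (u + m) = c * Poly_Mapping.lookup p m"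
proof -
  have "Poly_Mapping.lookup (Poly_Mapping.single u c * p) (u + m) =
      (\<Sum>m'\<in>Poly_Mapping.keys p. if m' = m then c * Poly_Mapping.lookup p m' else 0)"
    by (simp add: mult_single_expand Poly_Mapping.lookup_sum Poly_Mapping.lookup_single when_def)
  also have "\<dots> = c * Poly_Mapping.lookup p m" by (simp add: in_keys_iff)
  finally show ?thesis .
qed

lemma keys_single_mult:
  fixes p :: "('a::cancel_comm_monoid_add) \<Rightarrow>\<^sub>0 ('k::comm_semiring_1)"
  assumes "k \<in> Poly_Mapping.keys (Poly_Mapping.single u c * p)"
  shows "\<exists>m\<in>Poly_Mapping.keys p. k = u + m"
  using keys_mult[of "Poly_Mapping.single u c" p] assms by (auto split: if_splits)

definition indep :: "nat set set \<Rightarrow> nat set \<Rightarrow> bool" where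
  "indep E F \<longleftrightarrow> (\<forall>e\<in>E. \<not> e \<subseteq> F)"

lemma keys_sqfree_mult:
  fixes p :: "'k::comm_semiring_1 mpoly"
  assumes "k \<in> Poly_Mapping.keys (sqfree_mono U * p)" "finite U"
  shows "\<exists>m\<in>Poly_Mapping.keys p. k = ind U + m \<and> Poly_Mapping.keys k = U \<union> Poly_Mapping.keys m"
  using keys_single_mult[of k "ind U" 1 p] assms by (auto simp: sqfree_mono_ind keys_plus_nat keys_ind)

lemma ideal_lookup:
  fixes p :: "'k::comm_ring_1 mpoly"
  assumes fe: "\<forall>e\<in>E. finite e" and p: "p \<in> edge_ideal n E" and ind: "indep E (Poly_Mapping.keys m)"
  shows "Poly_Mapping.lookup p m = 0"
proof -
  obtain q where q: "p = (\<Sum>e\<in>E. q e * sqfree_mono e)" using p unfolding edge_ideal_def by blast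
  have z: "Poly_Mapping.lookup (q e * sqfree_mono e) m = 0" if e: "e \<in> E" for e
  proof (rule ccontr)
    assume "Poly_Mapping.lookup (q e * sqfree_mono e) m \<noteq> 0"
    moreover have "q e * sqfree_mono e = sqfree_mono e * q e" by (rule mult.commute)
    ultimately have "m \<in> Poly_Mapping.keys (sqfree_mono e * q e)" unfolding in_keys_iff by simp
    moreover have "finite e" using fe e by blast
    ultimately obtain m' where "m' \<in> Poly_Mapping.keys (q e)" "m = ind e + m' \<and> Poly_Mapping.keys m = e \<union> Poly_Mapping.keys m'"
      by (meson keys_sqfree_mult)
    then show False using ind e unfolding indep_def by blast
  qed
  have "Poly_Mapping.lookup p m = (\<Sum>e\<in>E. Poly_Mapping.lookup (q e * sqfree_mono e) m)"
    unfolding q by (rule Poly_Mapping.lookup_sum)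
  also have "\<dots> = 0" using z by simp
  finally show ?thesis .
qed

lemma zero_in_ideal: "(0::'k::comm_ring_1 mpoly) \<in> edge_ideal n E"
  unfolding edge_ideal_def mem_Collect_eq by (intro exI[of _ "\<lambda>e. 0"]) (simp add: polys_in_def)

lemma polys_in_sum:
  "(\<And>x. x \<in> X \<Longrightarrow> f x \<in> polys_in Z) \<Longrightarrow> sum f X \<in> polys_in Z"
  unfolding polys_in_def
proof (intro CollectI ballI)
  fix m assume a: "\<And>x. x \<in> X \<Longrightarrow> f x \<in> {p. \<forall>m\<in>Poly_Mapping.keys p. Poly_Mapping.keys m \<subseteq> Z}"
    and m: "m \<in> Poly_Mapping.keys (sum f X)"
  obtain x where "x \<in> X" "m \<in> Poly_Mapping.keys (f x)" using keys_sum[of f X] m by blast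
  then show "Poly_Mapping.keys m \<subseteq> Z" using a by blast
qed

lemma polys_in_single: "Poly_Mapping.keys m \<subseteq> Z \<Longrightarrow> Poly_Mapping.single m c \<in> polys_in Z"
  by (simp add: polys_in_def)

lemma ideal_intro:
  fixes p :: "'k::comm_ring_1 mpoly"
  assumes fin: "finite E" and fe: "\<forall>e\<in>E. finite e" and p: "p \<in> polys_in {..<n}"
    and ni: "\<forall>m\<in>Poly_Mapping.keys p. \<not> indep E (Poly_Mapping.keys m)"
  shows "p \<in> edge_ideal n E"
proof -
  have "\<forall>m\<in>Poly_Mapping.keys p. \<exists>e. e \<in> E \<and> e \<subseteq> Poly_Mapping.keys m" using ni by (auto simp: indep_def)
  then obtain ch where ch0: "\<forall>m\<in>Poly_Mapping.keys p. ch m \<in> E \<and> ch m \<subseteq> Poly_Mapping.keys m"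
    by (rule bchoice[elim_format]) blast
  then have ch: "\<And>m. m \<in> Poly_Mapping.keys p \<Longrightarrow> ch m \<in> E \<and> ch m \<subseteq> Poly_Mapping.keys m" by blast
  define q where "q e = (\<Sum>m\<in>{m\<in>Poly_Mapping.keys p. ch m = e}. Poly_Mapping.single (m - ind e) (Poly_Mapping.lookup p m))" for e
  have qin: "q e \<in> polys_in {..<n}" for e
    unfolding q_def
  proof (rule polys_in_sum)
    fix m assume m: "m \<in> {m\<in>Poly_Mapping.keys p. ch m = e}"
    then have "Poly_Mapping.keys m \<subseteq> {..<n}" using p unfolding polys_in_def by blast
    moreover have "Poly_Mapping.keys (m - ind e) \<subseteq> Poly_Mapping.keys m" by (rule keys_minus_nat)
    ultimately have "Poly_Mapping.keys (m - ind e) \<subseteq> {..<n}" by (rule order_trans[rotated])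
    then show "Poly_Mapping.single (m - ind e) (Poly_Mapping.lookup p m) \<in> polys_in {..<n}"
      by (rule polys_in_single)
  qed
  have trm: "q e * sqfree_mono e = (\<Sum>m\<in>{m\<in>Poly_Mapping.keys p. ch m = e}. Poly_Mapping.single m (Poly_Mapping.lookup p m))"
    if e: "e \<in> E" for e
  proof -
    have "q e * sqfree_mono e = (\<Sum>m\<in>{m\<in>Poly_Mapping.keys p. ch m = e}. Poly_Mapping.single (m - ind e + ind e) (Poly_Mapping.lookup p m))"
      by (simp add: q_def sum_distrib_right sqfree_mono_ind mult_single)
    also have "\<dots> = (\<Sum>m\<in>{m\<in>Poly_Mapping.keys p. ch m = e}. Poly_Mapping.single m (Poly_Mapping.lookup p m))"
    proof (rule sum.cong[OF refl])
      fix m assume "m \<in> {m\<in>Poly_Mapping.keys p. ch m = e}"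
      then have "e \<subseteq> Poly_Mapping.keys m" using ch by blast
      moreover have "finite e" using fe e by blast
      ultimately have "ind e + (m - ind e) = m" using ind_add_diff by blast
      then show "Poly_Mapping.single (m - ind e + ind e) (Poly_Mapping.lookup p m) = Poly_Mapping.single m (Poly_Mapping.lookup p m)"
        by (simp add: add.commute)
    qed
    finally show ?thesis .
  qed
  have "(\<Sum>e\<in>E. q e * sqfree_mono e) = (\<Sum>e\<in>E. \<Sum>m\<in>{m\<in>Poly_Mapping.keys p. ch m = e}. Poly_Mapping.single m (Poly_Mapping.lookup p m))"
    using trm by simp
  also have "\<dots> = (\<Sum>m\<in>Poly_Mapping.keys p. Poly_Mapping.single m (Poly_Mapping.lookup p m))"
    by (rule sum.group) (use fin ch in auto)
  also have "\<dots> = p" by (rule poly_expand[symmetric])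
  finally have "p = (\<Sum>e\<in>E. q e * sqfree_mono e)" by simp
  then show ?thesis using qin unfolding edge_ideal_def mem_Collect_eq by (intro exI[of _ q]) simp
qed

lemma indep_mono: "indep E F \<Longrightarrow> G \<subseteq> F \<Longrightarrow> indep E G"
  unfolding indep_def by blast

lemma keys_interval:
  fixes p :: "'k::comm_semiring_1 mpoly"
  assumes p: "p \<in> polys_in Z" and U: "U \<subseteq> Z" "finite U" and k: "k \<in> Poly_Mapping.keys (sqfree_mono U * p)"
  shows "U \<subseteq> Poly_Mapping.keys k \<and> Poly_Mapping.keys k \<subseteq> Z"
proof -
  obtain m where m: "m \<in> Poly_Mapping.keys p" "k = ind U + m \<and> Poly_Mapping.keys k = U \<union> Poly_Mapping.keys m"
    using keys_sqfree_mult[OF k U(2)] by blast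
  have "Poly_Mapping.keys m \<subseteq> Z" using p m(1) unfolding polys_in_def by blast
  then show ?thesis using m(2) U(1) by blast
qed

lemma lookup_sqfree_mult:
  fixes p :: "'k::comm_semiring_1 mpoly"
  shows "Poly_Mapping.lookup (sqfree_mono U * p) (ind U + m) = Poly_Mapping.lookup p m"
  unfolding sqfree_mono_ind by (simp add: lookup_single_mult)

lemma stanley_from_partition:
  fixes E :: "nat set set" and n :: nat and Uf Zf :: "nat set \<Rightarrow> nat set"
  assumes fin: "finite E" and fe: "\<forall>e\<in>E. finite e"
    and P: "\<And>F. F \<subseteq> {..<n} \<Longrightarrow> indep E F \<Longrightarrow> Uf F \<subseteq> F \<and> F \<subseteq> Zf F \<and> Zf F \<subseteq> {..<n} \<and> indep E (Zf F)"
    and stab: "\<And>F F'. F \<subseteq> {..<n} \<Longrightarrow> indep E F \<Longrightarrow> Uf F \<subseteq> F' \<Longrightarrow> F' \<subseteq> Zf F \<Longrightarrow> Uf F' = Uf F \<and> Zf F' = Zf F"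
  shows "\<exists>D. stanley_decomp TYPE('k::field) n (edge_ideal n E) D \<and>
     set D \<subseteq> (\<lambda>F. (Uf F, Zf F)) ` {F. F \<subseteq> {..<n} \<and> indep E F}"
proof -
  define \<Delta> where "\<Delta> = {F. F \<subseteq> {..<n} \<and> indep E F}"
  have fD: "finite \<Delta>" unfolding \<Delta>_def by (rule finite_subset[of _ "Pow {..<n}"]) auto
  obtain D where setD0: "set D = (\<lambda>F. (Uf F, Zf F)) ` \<Delta> \<and> distinct D"
    using finite_distinct_list[OF finite_imageI[OF fD, of "\<lambda>F. (Uf F, Zf F)"]] by (elim exE)
  then have setD: "set D = (\<lambda>F. (Uf F, Zf F)) ` \<Delta>" and dist: "distinct D" by simp_all
  define U where "U j = fst (D!j)" for j
  define Z where "Z j = snd (D!j)" for j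
  define L where "L = length D"
  have D1: "\<exists>F\<in>\<Delta>. D!j = (Uf F, Zf F)" if "j < L" for j
    using nth_mem[of j D] that setD unfolding L_def by auto
  have UZ: "U j \<subseteq> Z j" "Z j \<subseteq> {..<n}" "indep E (Z j)" "finite (U j)" if j: "j < L" for j
  proof -
    obtain F where F: "F \<in> \<Delta>" "D!j = (Uf F, Zf F)" using D1[OF j] by blast
    have "Uf F \<subseteq> F \<and> F \<subseteq> Zf F \<and> Zf F \<subseteq> {..<n} \<and> indep E (Zf F)" using P F(1) unfolding \<Delta>_def by blast
    then have h: "Uf F \<subseteq> Zf F" "Zf F \<subseteq> {..<n}" "indep E (Zf F)" by blast+
    have "finite (Uf F)" using h(1,2) by (meson finite_lessThan finite_subset subset_trans)
    then show "U j \<subseteq> Z j" "Z j \<subseteq> {..<n}" "indep E (Z j)" "finite (U j)"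
      unfolding U_def Z_def F(2) using h by simp_all
  qed
  have inD: "(Uf G, Zf G) = D!j" if j: "j < L" and G: "U j \<subseteq> G" "G \<subseteq> Z j" for j G
  proof -
    obtain F where F: "F \<in> \<Delta>" "D!j = (Uf F, Zf F)" using D1[OF j] by blast
    have "Uf G = Uf F \<and> Zf G = Zf F" using stab[of F G] F G unfolding \<Delta>_def U_def Z_def by auto
    then show ?thesis using F by simp
  qed
  have uniq: "j = j'" if "j < L" "j' < L" "U j \<subseteq> G" "G \<subseteq> Z j" "U j' \<subseteq> G" "G \<subseteq> Z j'" for j j' G
  proof -
    have "D!j = D!j'" using inD[OF that(1,3,4)] inD[OF that(2,5,6)] by simp
    then show ?thesis using dist that unfolding L_def by (simp add: nth_eq_iff_index_eq)
  qed
  have ex: "\<exists>j<L. U j \<subseteq> G \<and> G \<subseteq> Z j" if G: "G \<in> \<Delta>" for G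
  proof -
    have "(Uf G, Zf G) \<in> set D" using setD G by blast
    then obtain j where j: "j < L" "D!j = (Uf G, Zf G)" unfolding L_def by (auto simp: in_set_conv_nth)
    have "Uf G \<subseteq> G \<and> G \<subseteq> Zf G \<and> Zf G \<subseteq> {..<n} \<and> indep E (Zf G)" using P G unfolding \<Delta>_def by blast
    then have "U j \<subseteq> G" "G \<subseteq> Z j" using j unfolding U_def Z_def by simp_all
    then show ?thesis using j(1) by blast
  qed
  define I where "I = (edge_ideal n E :: 'k mpoly set)"
  have c1: "\<forall>i < L. U i \<subseteq> Z i \<and> Z i \<subseteq> {..<n}" using UZ by blast
  have c4: "\<forall>i < L. \<forall>p \<in> polys_in (Z i). sqfree_mono (U i) * p \<in> I \<longrightarrow> p = 0"
  proof (intro allI impI ballI)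
    fix i and p :: "'k mpoly" assume i: "i < L" and p: "p \<in> polys_in (Z i)" and pI: "sqfree_mono (U i) * p \<in> I"
    show "p = 0"
    proof (rule poly_mapping_eqI)
      fix m
      show "Poly_Mapping.lookup p m = Poly_Mapping.lookup 0 m"
      proof (cases "m \<in> Poly_Mapping.keys p")
        case False then show ?thesis by (simp add: in_keys_iff)
      next
        case True
        then have km: "Poly_Mapping.keys m \<subseteq> Z i" using p unfolding polys_in_def by blast
        have kk: "Poly_Mapping.keys (ind (U i) + m) \<subseteq> Z i" using km UZ[OF i]
          by (simp add: keys_plus_nat keys_ind)
        have "indep E (Poly_Mapping.keys (ind (U i) + m))" using indep_mono[OF UZ(3)[OF i] kk] .
        then have "Poly_Mapping.lookup (sqfree_mono (U i) * p) (ind (U i) + m) = 0"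
          using ideal_lookup[OF fe pI[unfolded I_def]] by blast
        then show ?thesis by (simp add: lookup_sqfree_mult)
      qed
    qed
  qed
  have c3: "\<forall>g :: nat \<Rightarrow> 'k mpoly. (\<forall>i < L. g i \<in> polys_in (Z i)) \<and> (\<Sum>i<L. sqfree_mono (U i) * g i) \<in> I \<longrightarrow>
         (\<forall>i < L. sqfree_mono (U i) * g i \<in> I)"
  proof (intro allI impI)
    fix g :: "nat \<Rightarrow> 'k mpoly" and i
    assume a: "(\<forall>i < L. g i \<in> polys_in (Z i)) \<and> (\<Sum>i<L. sqfree_mono (U i) * g i) \<in> I" and i: "i < L"
    define t where "t j = sqfree_mono (U j) * g j" for j
    have sI: "(\<Sum>j<L. t j) \<in> I" using a unfolding t_def by simp
    have "t i = 0"
    proof (rule poly_mapping_eqI)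
      fix k
      show "Poly_Mapping.lookup (t i) k = Poly_Mapping.lookup 0 k"
      proof (rule ccontr)
        assume nz: "Poly_Mapping.lookup (t i) k \<noteq> Poly_Mapping.lookup 0 k"
        then have kt: "k \<in> Poly_Mapping.keys (t i)" by (simp add: in_keys_iff)
        have gi: "g i \<in> polys_in (Z i)" using a i by blast
        have ki: "U i \<subseteq> Poly_Mapping.keys k \<and> Poly_Mapping.keys k \<subseteq> Z i"
          using keys_interval[OF gi UZ(1)[OF i] UZ(4)[OF i]] kt unfolding t_def by blast
        have oth: "Poly_Mapping.lookup (t j) k = 0" if j: "j \<in> {..<L} - {i}" for j
        proof (rule ccontr)
          assume "Poly_Mapping.lookup (t j) k \<noteq> 0"
          then have kj: "k \<in> Poly_Mapping.keys (t j)" by (simp add: in_keys_iff)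
          have jL: "j < L" using j by blast
          have gj: "g j \<in> polys_in (Z j)" using a jL by blast
          have "U j \<subseteq> Poly_Mapping.keys k \<and> Poly_Mapping.keys k \<subseteq> Z j"
            using keys_interval[OF gj UZ(1)[OF jL] UZ(4)[OF jL]] kj unfolding t_def by blast
          then have "j = i" using uniq[OF jL i] ki by blast
          then show False using j by blast
        qed
        have "Poly_Mapping.lookup (\<Sum>j<L. t j) k = (\<Sum>j<L. Poly_Mapping.lookup (t j) k)"
          by (rule Poly_Mapping.lookup_sum)
        also have "\<dots> = Poly_Mapping.lookup (t i) k + (\<Sum>j\<in>{..<L} - {i}. Poly_Mapping.lookup (t j) k)"
          using i by (simp add: sum.remove)
        also have "(\<Sum>j\<in>{..<L} - {i}. Poly_Mapping.lookup (t j) k) = 0"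
          using oth by simp
        finally have eq: "Poly_Mapping.lookup (\<Sum>j<L. t j) k = Poly_Mapping.lookup (t i) k" by simp
        have "indep E (Poly_Mapping.keys k)" using indep_mono[OF UZ(3)[OF i]] ki by blast
        then have "Poly_Mapping.lookup (\<Sum>j<L. t j) k = 0"
          using ideal_lookup[OF fe sI[unfolded I_def]] by blast
        then show False using eq nz by simp
      qed
    qed
    then have "sqfree_mono (U i) * g i = 0" by (simp only: t_def)
    then show "sqfree_mono (U i) * g i \<in> I" unfolding I_def by (simp only: zero_in_ideal)
  qed
  have c2: "\<forall>f \<in> polys_in {..<n}. \<exists>g :: nat \<Rightarrow> 'k mpoly.
         (\<forall>i < L. g i \<in> polys_in (Z i)) \<and> f - (\<Sum>i<L. sqfree_mono (U i) * g i) \<in> I"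
  proof
    fix f :: "'k mpoly" assume f: "f \<in> polys_in {..<n}"
    define K where "K = Poly_Mapping.keys f"
    have fK: "finite K" unfolding K_def by simp
    have Kn: "Poly_Mapping.keys m \<subseteq> {..<n}" if "m \<in> K" for m using f that unfolding polys_in_def K_def by blast
    define M where "M = {m \<in> K. indep E (Poly_Mapping.keys m)}"
    have MK: "M \<subseteq> K" unfolding M_def by blast
    have fM: "finite M" using fK MK by (rule finite_subset[rotated])
    have MD: "Poly_Mapping.keys m \<in> \<Delta>" if "m \<in> M" for m using that Kn unfolding M_def \<Delta>_def by blast
    define J where "J (m::nat \<Rightarrow>\<^sub>0 nat) = (THE j. j < L \<and> U j \<subseteq> Poly_Mapping.keys m \<and> Poly_Mapping.keys m \<subseteq> Z j)" for m
    have J: "J m < L \<and> U (J m) \<subseteq> Poly_Mapping.keys m \<and> Poly_Mapping.keys m \<subseteq> Z (J m)" if m: "m \<in> M" for m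
    proof -
      have "\<exists>!j. j < L \<and> U j \<subseteq> Poly_Mapping.keys m \<and> Poly_Mapping.keys m \<subseteq> Z j"
      proof (rule ex_ex1I)
        show "\<exists>j. j < L \<and> U j \<subseteq> Poly_Mapping.keys m \<and> Poly_Mapping.keys m \<subseteq> Z j" using ex[OF MD[OF m]] by blast
      next
        fix j j' assume "j < L \<and> U j \<subseteq> Poly_Mapping.keys m \<and> Poly_Mapping.keys m \<subseteq> Z j"
          "j' < L \<and> U j' \<subseteq> Poly_Mapping.keys m \<and> Poly_Mapping.keys m \<subseteq> Z j'"
        then show "j = j'" using uniq by blast
      qed
      then show ?thesis unfolding J_def by (rule theI')
    qed
    define g where "g j = (\<Sum>m\<in>{m\<in>M. J m = j}. Poly_Mapping.single (m - ind (U j)) (Poly_Mapping.lookup f m))" for j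
    have gZ: "g i \<in> polys_in (Z i)" for i
      unfolding g_def
    proof (rule polys_in_sum)
      fix m assume m: "m \<in> {m\<in>M. J m = i}"
      then have "Poly_Mapping.keys m \<subseteq> Z i" using J by blast
      moreover have "Poly_Mapping.keys (m - ind (U i)) \<subseteq> Poly_Mapping.keys m" by (rule keys_minus_nat)
      ultimately have "Poly_Mapping.keys (m - ind (U i)) \<subseteq> Z i" by (rule order_trans[rotated])
      then show "Poly_Mapping.single (m - ind (U i)) (Poly_Mapping.lookup f m) \<in> polys_in (Z i)"
        by (rule polys_in_single)
    qed
    have tj: "sqfree_mono (U j) * g j = (\<Sum>m\<in>{m\<in>M. J m = j}. Poly_Mapping.single m (Poly_Mapping.lookup f m))"
      if j: "j < L" for j
    proof -
      have "sqfree_mono (U j) * g j = (\<Sum>m\<in>{m\<in>M. J m = j}. Poly_Mapping.single (ind (U j) + (m - ind (U j))) (Poly_Mapping.lookup f m))"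
        unfolding g_def sqfree_mono_ind sum_distrib_left mult_single by simp
      also have "\<dots> = (\<Sum>m\<in>{m\<in>M. J m = j}. Poly_Mapping.single m (Poly_Mapping.lookup f m))"
      proof (rule sum.cong[OF refl])
        fix m assume m: "m \<in> {m\<in>M. J m = j}"
        then have "U j \<subseteq> Poly_Mapping.keys m" using J by blast
        then have "ind (U j) + (m - ind (U j)) = m" using ind_add_diff UZ(4)[OF j] by blast
        then show "Poly_Mapping.single (ind (U j) + (m - ind (U j))) (Poly_Mapping.lookup f m) = Poly_Mapping.single m (Poly_Mapping.lookup f m)"
          by simp
      qed
      finally show ?thesis .
    qed
    have "(\<Sum>i<L. sqfree_mono (U i) * g i) = (\<Sum>i<L. \<Sum>m\<in>{m\<in>M. J m = i}. Poly_Mapping.single m (Poly_Mapping.lookup f m))"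
      using tj by simp
    also have "\<dots> = (\<Sum>m\<in>M. Poly_Mapping.single m (Poly_Mapping.lookup f m))"
    proof (rule sum.group[OF fM finite_lessThan])
      show "J ` M \<subseteq> {..<L}" using J by blast
    qed
    finally have sumeq: "(\<Sum>i<L. sqfree_mono (U i) * g i) = (\<Sum>m\<in>M. Poly_Mapping.single m (Poly_Mapping.lookup f m))" .
    have "f = (\<Sum>m\<in>K. Poly_Mapping.single m (Poly_Mapping.lookup f m))" unfolding K_def by (rule poly_expand)
    also have "\<dots> = (\<Sum>m\<in>K - M. Poly_Mapping.single m (Poly_Mapping.lookup f m)) + (\<Sum>m\<in>M. Poly_Mapping.single m (Poly_Mapping.lookup f m))"
      by (rule sum.subset_diff[OF MK fK])
    finally have "f - (\<Sum>i<L. sqfree_mono (U i) * g i) = (\<Sum>m\<in>K - M. Poly_Mapping.single m (Poly_Mapping.lookup f m))"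
      unfolding sumeq by (metis add_diff_cancel_right')
    moreover have "(\<Sum>m\<in>K - M. Poly_Mapping.single m (Poly_Mapping.lookup f m)) \<in> I"
      unfolding I_def
    proof (rule ideal_intro[OF fin fe])
      show "(\<Sum>m\<in>K - M. Poly_Mapping.single m (Poly_Mapping.lookup f m)) \<in> polys_in {..<n}"
      proof (rule polys_in_sum)
        fix m assume "m \<in> K - M"
        then have "Poly_Mapping.keys m \<subseteq> {..<n}" using Kn by blast
        then show "Poly_Mapping.single m (Poly_Mapping.lookup f m) \<in> polys_in {..<n}" by (rule polys_in_single)
      qed
      show "\<forall>m\<in>Poly_Mapping.keys (\<Sum>m\<in>K - M. Poly_Mapping.single m (Poly_Mapping.lookup f m)). \<not> indep E (Poly_Mapping.keys m)"
      proof
        fix m assume "m \<in> Poly_Mapping.keys (\<Sum>m\<in>K - M. Poly_Mapping.single m (Poly_Mapping.lookup f m))"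
        then obtain m' where m': "m' \<in> K - M" "m \<in> Poly_Mapping.keys (Poly_Mapping.single m' (Poly_Mapping.lookup f m'))"
          using keys_sum[of "\<lambda>m. Poly_Mapping.single m (Poly_Mapping.lookup f m)" "K - M"] by blast
        have "m = m'" using m'(2) by (simp split: if_splits)
        then show "\<not> indep E (Poly_Mapping.keys m)" using m'(1) unfolding M_def by blast
      qed
    qed
    ultimately show "\<exists>g :: nat \<Rightarrow> 'k mpoly. (\<forall>i < L. g i \<in> polys_in (Z i)) \<and> f - (\<Sum>i<L. sqfree_mono (U i) * g i) \<in> I"
      using gZ by (intro exI[of _ g]) simp
  qed
  show ?thesis
    apply (rule exI[of _ D])
    using c1 c2 c3 c4 setD unfolding stanley_decomp_def U_def Z_def L_def I_def \<Delta>_def by simp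
qed

lemma adj_compl_notin: "adj (compl_graph V H) u v \<Longrightarrow> {u,v} \<notin> H"
  unfolding adj_def compl_graph_def by auto

lemma adj_compl_intro: "u \<in> V \<Longrightarrow> v \<in> V \<Longrightarrow> u \<noteq> v \<Longrightarrow> {u,v} \<notin> H \<Longrightarrow> adj (compl_graph V H) u v"
  unfolding adj_def compl_graph_def by blast

lemma sg_compl: "simple_graph_on V (compl_graph V H)"
  unfolding simple_graph_on_def compl_graph_def by blast

lemma cochordal_single: "cochordal V {e}"
  unfolding cochordal_def chordal_def
proof (intro allI impI)
  fix vs assume ic: "induced_cycle V (compl_graph V {e}) vs"
  define L where "L = length vs"
  have d: "distinct vs" and l3: "L \<ge> 3" and sV: "set vs \<subseteq> V"
    and na: "\<And>i j. i < L \<Longrightarrow> j < L \<Longrightarrow> adj (compl_graph V {e}) (vs!i) (vs!j) \<Longrightarrow> j = (i + 1) mod L \<or> i = (j + 1) mod L"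
    using ic unfolding induced_cycle_def L_def by blast+
  show "length vs = 3"
  proof (rule ccontr)
    assume "length vs \<noteq> 3"
    then have l4: "L \<ge> 4" using l3 L_def by simp
    have inV: "vs!i \<in> V" if "i < L" for i using sV that nth_mem unfolding L_def by blast
    have dd: "vs!i \<noteq> vs!j" if "i < L" "j < L" "i \<noteq> j" for i j
      using d that unfolding L_def by (simp add: nth_eq_iff_index_eq)
    have L0: "0 < L" "1 < L" "2 < L" "3 < L" using l4 by simp_all
    have m1: "(0+1) mod L = 1" "(2+1) mod L = 3" "(1+1) mod L = 2" using l4 by simp_all
    have m2: "(3+1) mod L \<noteq> 1" using l4 by (cases "L = 4") simp_all
    have n02: "\<not> adj (compl_graph V {e}) (vs!0) (vs!2)"
    proof
      assume a: "adj (compl_graph V {e}) (vs!0) (vs!2)"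
      have "2 = (0 + 1) mod L \<or> 0 = (2 + 1) mod L" by (rule na[OF L0(1) L0(3) a])
      then show False using m1 by simp
    qed
    have n13: "\<not> adj (compl_graph V {e}) (vs!1) (vs!3)"
    proof
      assume a: "adj (compl_graph V {e}) (vs!1) (vs!3)"
      have "3 = (1 + 1) mod L \<or> 1 = (3 + 1) mod L" by (rule na[OF L0(2) L0(4) a])
      then show False using m1 m2 by simp
    qed
    have e1: "{vs!0, vs!2} = e"
    proof (rule ccontr)
      assume "{vs!0, vs!2} \<noteq> e"
      then have "{vs!0, vs!2} \<notin> {e}" by simp
      then have "adj (compl_graph V {e}) (vs!0) (vs!2)"
        using adj_compl_intro[OF inV[OF L0(1)] inV[OF L0(3)] dd[OF L0(1) L0(3)], of "{e}"] by simp
      then show False using n02 by simp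
    qed
    have e2: "{vs!1, vs!3} = e"
    proof (rule ccontr)
      assume "{vs!1, vs!3} \<noteq> e"
      then have "{vs!1, vs!3} \<notin> {e}" by simp
      then have "adj (compl_graph V {e}) (vs!1) (vs!3)"
        using adj_compl_intro[OF inV[OF L0(2)] inV[OF L0(4)] dd[OF L0(2) L0(4)], of "{e}"] by simp
      then show False using n13 by simp
    qed
    have "vs!0 \<in> {vs!1, vs!3}" using e1 e2 by blast
    moreover have "vs!0 \<noteq> vs!1" "vs!0 \<noteq> vs!3" using dd L0 by simp_all
    ultimately show False by blast
  qed
qed

lemma cochord_exists:
  assumes sgE: "simple_graph_on {..<n} E"
  shows "\<exists>Hs :: nat set set list. length Hs = cochord {..<n} E \<and>
      (\<forall>H \<in> set Hs. H \<subseteq> E \<and> cochordal {..<n} H) \<and> \<Union>(set Hs) = E"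
proof -
  have sub: "E \<subseteq> Pow {..<n}"
  proof
    fix e assume "e \<in> E"
    then obtain u v where "e = {u,v}" "u \<in> {..<n}" "v \<in> {..<n}" using sgE unfolding simple_graph_on_def by blast
    then show "e \<in> Pow {..<n}" by simp
  qed
  have fE: "finite E" using finite_subset[OF sub] by simp
  obtain xs where xs: "set xs = E" using finite_list[OF fE] by (elim exE)
  define Hs where "Hs = map (\<lambda>e. {e}) xs"
  have sH: "set Hs = (\<lambda>e. {e}) ` E" by (simp add: Hs_def xs)
  have a: "\<forall>H \<in> set Hs. H \<subseteq> E \<and> cochordal {..<n} H"
  proof
    fix H assume "H \<in> set Hs"
    then obtain e where "e \<in> E" "H = {e}" using sH by blast
    then show "H \<subseteq> E \<and> cochordal {..<n} H" using cochordal_single[of "{..<n}" e] by simp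
  qed
  have b: "\<Union>(set Hs) = E" unfolding sH by blast
  have "\<exists>k. \<exists>Hs :: nat set set list. length Hs = k \<and>
      (\<forall>H \<in> set Hs. H \<subseteq> E \<and> cochordal {..<n} H) \<and> \<Union>(set Hs) = E"
    using a b by (intro exI[of _ "length Hs"] exI[of _ Hs]) simp
  then show ?thesis unfolding cochord_def by (rule LeastI_ex)
qed

lemma min_unique:
  fixes r :: "'v \<Rightarrow> nat"
  assumes fin: "finite F" and ne: "F \<noteq> {}" and FV: "F \<subseteq> V" and inj: "inj_on r V"
  shows "\<exists>!v. v \<in> F \<and> (\<forall>w\<in>F. r v \<le> r w)"
proof (rule ex_ex1I)
  have fi: "finite (r ` F)" using fin by (rule finite_imageI)
  have "r ` F \<noteq> {}" using ne by simp
  then have "Min (r ` F) \<in> r ` F" using fi by (rule Min_in[rotated])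
  then obtain v where v: "v \<in> F" "r v = Min (r ` F)" by (elim imageE) simp
  have "\<forall>w\<in>F. r v \<le> r w"
  proof
    fix w assume "w \<in> F"
    then have "r w \<in> r ` F" by (rule imageI)
    then have "Min (r ` F) \<le> r w" using fi by (rule Min_le[rotated])
    then show "r v \<le> r w" using v(2) by simp
  qed
  then show "\<exists>v. v \<in> F \<and> (\<forall>w\<in>F. r v \<le> r w)" using v(1) by blast
next
  fix v v' assume a: "v \<in> F \<and> (\<forall>w\<in>F. r v \<le> r w)" "v' \<in> F \<and> (\<forall>w\<in>F. r v' \<le> r w)"
  then have "r v \<le> r v'" "r v' \<le> r v" by blast+
  then have "r v = r v'" by simp
  moreover have "v \<in> V" "v' \<in> V" using a FV by blast+
  ultimately show "v = v'" using inj by (simp add: inj_on_def)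
qed

lemma partition_exists:
  fixes n :: nat and E :: "nat set set" and Hs :: "nat set set list"
  assumes sgE: "simple_graph_on {..<n} E"
    and Hs: "\<forall>H\<in>set Hs. H \<subseteq> E \<and> cochordal {..<n} H" and cov: "\<Union>(set Hs) = E"
  shows "\<exists>Uf Zf. (\<forall>F. F \<subseteq> {..<n} \<longrightarrow> indep E F \<longrightarrow> Uf F \<subseteq> F \<and> F \<subseteq> Zf F \<and> Zf F \<subseteq> {..<n} \<and> indep E (Zf F)
        \<and> card (Uf F) \<le> length Hs) \<and>
     (\<forall>F F'. F \<subseteq> {..<n} \<longrightarrow> indep E F \<longrightarrow> Uf F \<subseteq> F' \<longrightarrow> F' \<subseteq> Zf F \<longrightarrow> Uf F' = Uf F \<and> Zf F' = Zf F)"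
proof -
  define V where "V = {..<n}"
  define k where "k = length Hs"
  define C where "C i = compl_graph V (Hs!i)" for i
  have chC: "chordal V (C i)" if "i < k" for i
  proof -
    have "Hs!i \<in> set Hs" using that unfolding k_def by simp
    then show ?thesis using Hs unfolding C_def V_def cochordal_def by blast
  qed
  have "\<forall>i\<in>{..<k}. \<exists>r::nat\<Rightarrow>nat. inj_on r V \<and> (\<forall>v\<in>V. \<forall>u w. adj (C i) v u \<longrightarrow> adj (C i) v w \<longrightarrow> r v < r u \<longrightarrow> r v < r w \<longrightarrow> u \<noteq> w \<longrightarrow> adj (C i) u w)"
  proof
    fix i assume "i \<in> {..<k}"
    then have c: "chordal V (C i)" using chC by simp
    have s: "simple_graph_on V (C i)" unfolding C_def by (rule sg_compl)
    have f: "finite V" unfolding V_def by simp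
    show "\<exists>r::nat\<Rightarrow>nat. inj_on r V \<and> (\<forall>v\<in>V. \<forall>u w. adj (C i) v u \<longrightarrow> adj (C i) v w \<longrightarrow> r v < r u \<longrightarrow> r v < r w \<longrightarrow> u \<noteq> w \<longrightarrow> adj (C i) u w)"
      using peo[OF f s c] .
  qed
  from bchoice[OF this] obtain R :: "nat \<Rightarrow> nat \<Rightarrow> nat" where R: "\<forall>i\<in>{..<k}. inj_on (R i) V \<and> (\<forall>v\<in>V. \<forall>u w. adj (C i) v u \<longrightarrow> adj (C i) v w \<longrightarrow> R i v < R i u \<longrightarrow> R i v < R i w \<longrightarrow> u \<noteq> w \<longrightarrow> adj (C i) u w)"
    by (elim exE)
  have Ri: "inj_on (R i) V \<and> (\<forall>v\<in>V. \<forall>u w. adj (C i) v u \<longrightarrow> adj (C i) v w \<longrightarrow> R i v < R i u \<longrightarrow> R i v < R i w \<longrightarrow> u \<noteq> w \<longrightarrow> adj (C i) u w)"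
    if "i < k" for i
  proof -
    have "i \<in> {..<k}" using that by simp
    then show ?thesis using R by (rule bspec[rotated])
  qed
  have Rinj: "inj_on (R i) V" if "i < k" for i using Ri[OF that] by (rule conjunct1)
  have Rpeo: "adj (C i) u w" if "i < k" "v \<in> V" "adj (C i) v u" "adj (C i) v w" "R i v < R i u" "R i v < R i w" "u \<noteq> w" for i v u w
    using R that by blast
  define mn where "mn i F = (THE v. v \<in> F \<and> (\<forall>w\<in>F. R i v \<le> R i w))" for i F
  have mnP: "mn i F \<in> F \<and> (\<forall>w\<in>F. R i (mn i F) \<le> R i w)" if "i < k" "F \<subseteq> V" "F \<noteq> {}" for i F
  proof -
    have "finite F" using that(2) unfolding V_def by (rule finite_subset) simp
    then have "\<exists>!v. v \<in> F \<and> (\<forall>w\<in>F. R i v \<le> R i w)" by (rule min_unique[OF _ that(3) that(2) Rinj[OF that(1)]])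
    then show ?thesis unfolding mn_def by (rule theI')
  qed
  have mnU: "mn i F = v" if "i < k" "F \<subseteq> V" "v \<in> F" "\<forall>w\<in>F. R i v \<le> R i w" for i F v
  proof -
    have "finite F" using that(2) unfolding V_def by (rule finite_subset) simp
    moreover have "F \<noteq> {}" using that(3) by blast
    ultimately have u: "\<exists>!v. v \<in> F \<and> (\<forall>w\<in>F. R i v \<le> R i w)" by (rule min_unique[OF _ _ that(2) Rinj[OF that(1)]])
    have "mn i F \<in> F \<and> (\<forall>w\<in>F. R i (mn i F) \<le> R i w)" by (rule mnP[OF that(1,2) \<open>F \<noteq> {}\<close>])
    then show ?thesis using u that(3,4) by blast
  qed
  define cl where "cl i v = insert v {w \<in> V. adj (C i) v w \<and> R i v < R i w}" for i v
  define Uf where "Uf F = (if F = {} then {} else (\<lambda>i. mn i F) ` {..<k})" for F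
  define Zf where "Zf F = (if F = {} \<and> 0 < k then {} else V \<inter> (\<Inter>i\<in>{..<k}. cl i (mn i F)))" for F
  have edge2: "\<exists>u v. e = {u,v} \<and> u \<noteq> v \<and> u \<in> V \<and> v \<in> V" if "e \<in> E" for e
    using sgE that unfolding simple_graph_on_def V_def by blast
  have HE: "Hs!i \<subseteq> E" if "i < k" for i
  proof -
    have "Hs!i \<in> set Hs" using that unfolding k_def by simp
    then show ?thesis using Hs by blast
  qed
  have inH: "\<exists>i<k. e \<in> Hs!i" if eE: "e \<in> E" for e
  proof -
    obtain H where "H \<in> set Hs" "e \<in> H" using cov eE by blast
    then obtain j where "j < length Hs" "Hs!j = H" by (auto simp: in_set_conv_nth)
    then show ?thesis unfolding k_def using \<open>e \<in> H\<close> by blast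
  qed
  have P: "Uf F \<subseteq> F \<and> F \<subseteq> Zf F \<and> Zf F \<subseteq> V \<and> indep E (Zf F) \<and> card (Uf F) \<le> k"
    if F: "F \<subseteq> V" "indep E F" for F
  proof (cases "F = {}")
    case True
    have z: "Zf F \<subseteq> V" unfolding Zf_def by auto
    have "indep E (Zf F)"
    proof (cases "0 < k")
      case True
      then have "Zf F = {}" using \<open>F = {}\<close> unfolding Zf_def by simp
      moreover have "e \<noteq> {}" if "e \<in> E" for e using edge2[OF that] by blast
      ultimately show ?thesis unfolding indep_def by blast
    next
      case False
      then have "E = {}" using cov unfolding k_def by simp
      then show ?thesis unfolding indep_def by blast
    qed
    then show ?thesis using True z unfolding Uf_def by simp
  next
    case False
    have U1: "Uf F \<subseteq> F" unfolding Uf_def using False mnP F(1) by auto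
    have U2: "card (Uf F) \<le> k" unfolding Uf_def using False card_image_le[of "{..<k}" "\<lambda>i. mn i F"] by simp
    have Zeq: "Zf F = V \<inter> (\<Inter>i\<in>{..<k}. cl i (mn i F))" unfolding Zf_def using False by simp
    have FZ: "F \<subseteq> Zf F"
    proof
      fix w assume w: "w \<in> F"
      have "w \<in> cl i (mn i F)" if i: "i < k" for i
      proof (cases "w = mn i F")
        case True then show ?thesis unfolding cl_def by simp
      next
        case ne: False
        have m: "mn i F \<in> F" "R i (mn i F) \<le> R i w" using mnP[OF i F(1) False] w by auto
        have wV: "w \<in> V" "mn i F \<in> V" using w m F(1) by auto
        have "R i (mn i F) \<noteq> R i w" using Rinj[OF i] wV ne by (metis inj_onD)
        then have lt: "R i (mn i F) < R i w" using m by simp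
        have "{mn i F, w} \<notin> Hs!i"
        proof
          assume "{mn i F, w} \<in> Hs!i"
          then have "{mn i F, w} \<in> E" using HE[OF i] by blast
          moreover have "{mn i F, w} \<subseteq> F" using m(1) w by blast
          ultimately show False using F(2) unfolding indep_def by blast
        qed
        then have "adj (C i) (mn i F) w" unfolding C_def using adj_compl_intro wV ne by metis
        then show ?thesis unfolding cl_def using wV lt by blast
      qed
      moreover have "w \<in> V" using w F(1) by blast
      ultimately show "w \<in> Zf F" unfolding Zeq by blast
    qed
    have ZV: "Zf F \<subseteq> V" unfolding Zeq by blast
    have Zi: "indep E (Zf F)"
      unfolding indep_def
    proof (intro ballI notI)
      fix e assume e: "e \<in> E" "e \<subseteq> Zf F"
      obtain i where i: "i < k" "e \<in> Hs!i" using inH[OF e(1)] by blast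
      obtain u v where uv: "e = {u,v}" "u \<noteq> v" "u \<in> V" "v \<in> V" using edge2[OF e(1)] by blast
      define m where "m = mn i F"
      have mV: "m \<in> V" using mnP[OF i(1) F(1) False] F(1) unfolding m_def by blast
      have ucl: "u \<in> cl i m" "v \<in> cl i m" using e(2) uv i(1) unfolding Zeq m_def by blast+
      have "adj (C i) u v"
      proof (cases "u = m")
        case True
        then have "v \<noteq> m" using uv by simp
        then have "adj (C i) m v" using ucl(2) unfolding cl_def by blast
        then show ?thesis using True by simp
      next
        case um: False
        show ?thesis
        proof (cases "v = m")
          case True
          have "adj (C i) m u" using ucl(1) um unfolding cl_def by blast
          then show ?thesis using True adj_sym by metis
        next
          case vm: False
          have a1: "adj (C i) m u" "R i m < R i u" using ucl(1) um unfolding cl_def by blast+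
          have a2: "adj (C i) m v" "R i m < R i v" using ucl(2) vm unfolding cl_def by blast+
          show ?thesis using Rpeo[OF i(1) mV a1(1) a2(1) a1(2) a2(2) uv(2)] .
        qed
      qed
      then have "{u,v} \<notin> Hs!i" unfolding C_def by (rule adj_compl_notin)
      then show False using i(2) uv(1) by simp
    qed
    show ?thesis using U1 U2 FZ ZV Zi by blast
  qed
  have stab: "Uf F' = Uf F \<and> Zf F' = Zf F"
    if F: "F \<subseteq> V" "indep E F" and F': "Uf F \<subseteq> F'" "F' \<subseteq> Zf F" for F F'
  proof (cases "k = 0")
    case True
    then show ?thesis unfolding Uf_def Zf_def by simp
  next
    case kpos: False
    show ?thesis
    proof (cases "F = {}")
      case True
      then have "Zf F = {}" using kpos unfolding Zf_def by simp
      then have "F' = {}" using F' by blast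
      then show ?thesis using True by simp
    next
      case Fne: False
      have Zeq: "Zf F = V \<inter> (\<Inter>i\<in>{..<k}. cl i (mn i F))" unfolding Zf_def using Fne by simp
      have "mn 0 F \<in> Uf F" unfolding Uf_def using Fne kpos by simp
      then have F'ne: "F' \<noteq> {}" using F' by blast
      have F'V: "F' \<subseteq> V" using F' unfolding Zeq by blast
      have meq: "mn i F' = mn i F" if i: "i < k" for i
      proof (rule mnU[OF i F'V])
        show "mn i F \<in> F'" using F'(1) i Fne unfolding Uf_def by auto
        show "\<forall>w\<in>F'. R i (mn i F) \<le> R i w"
        proof
          fix w assume "w \<in> F'"
          then have "w \<in> cl i (mn i F)" using F'(2) i unfolding Zeq by blast
          then show "R i (mn i F) \<le> R i w" unfolding cl_def by auto
        qed
      qed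
      have "Uf F' = Uf F" unfolding Uf_def using Fne F'ne meq by simp
      moreover have "Zf F' = Zf F" unfolding Zf_def using Fne F'ne meq by simp
      ultimately show ?thesis by blast
    qed
  qed
  show ?thesis
    apply (rule exI[of _ Uf], rule exI[of _ Zf])
    using P stab unfolding V_def k_def by blast
qed

theorem theorem5p6:
  fixes n :: nat and E :: "nat set set"
  assumes "simple_graph_on {..<n} E"
  shows "sreg TYPE('k::field) n (edge_ideal n E) \<le> cochord {..<n} E"
proof -
  obtain Hs :: "nat set set list" where Hs: "length Hs = cochord {..<n} E"
    "\<forall>H\<in>set Hs. H \<subseteq> E \<and> cochordal {..<n} H" "\<Union>(set Hs) = E"
    using cochord_exists[OF assms] by (elim exE conjE)
  obtain Uf Zf where UZ: "\<forall>F. F \<subseteq> {..<n} \<longrightarrow> indep E F \<longrightarrow> Uf F \<subseteq> F \<and> F \<subseteq> Zf F \<and> Zf F \<subseteq> {..<n} \<and> indep E (Zf F)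
        \<and> card (Uf F) \<le> length Hs"
     "\<forall>F F'. F \<subseteq> {..<n} \<longrightarrow> indep E F \<longrightarrow> Uf F \<subseteq> F' \<longrightarrow> F' \<subseteq> Zf F \<longrightarrow> Uf F' = Uf F \<and> Zf F' = Zf F"
    using partition_exists[OF assms Hs(2,3)] by (elim exE conjE)
  have sub: "E \<subseteq> Pow {..<n}"
  proof
    fix e assume "e \<in> E"
    then obtain u v where "e = {u,v}" "u \<in> {..<n}" "v \<in> {..<n}" using assms unfolding simple_graph_on_def by blast
    then show "e \<in> Pow {..<n}" by simp
  qed
  have fE: "finite E" using finite_subset[OF sub] by simp
  have fe: "\<forall>e\<in>E. finite e"
  proof
    fix e assume "e \<in> E"
    then have "e \<subseteq> {..<n}" using sub by blast
    then show "finite e" by (rule finite_subset) simp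
  qed
  have P: "Uf F \<subseteq> F \<and> F \<subseteq> Zf F \<and> Zf F \<subseteq> {..<n} \<and> indep E (Zf F)" if "F \<subseteq> {..<n}" "indep E F" for F
    using UZ(1) that by blast
  have S: "Uf F' = Uf F \<and> Zf F' = Zf F" if "F \<subseteq> {..<n}" "indep E F" "Uf F \<subseteq> F'" "F' \<subseteq> Zf F" for F F'
    using UZ(2) that by blast
  have "\<exists>D. stanley_decomp TYPE('k) n (edge_ideal n E) D \<and>
     set D \<subseteq> (\<lambda>F. (Uf F, Zf F)) ` {F. F \<subseteq> {..<n} \<and> indep E F}"
    by (rule stanley_from_partition[OF fE fe P S])
  then obtain D where D: "stanley_decomp TYPE('k) n (edge_ideal n E) D"
    "set D \<subseteq> (\<lambda>F. (Uf F, Zf F)) ` {F. F \<subseteq> {..<n} \<and> indep E F}" by (elim exE conjE)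
  have c: "\<forall>(U, Z) \<in> set D. card U \<le> cochord {..<n} E"
  proof
    fix x assume "x \<in> set D"
    then obtain F where F: "F \<subseteq> {..<n}" "indep E F" "x = (Uf F, Zf F)" using D(2) by blast
    have "card (Uf F) \<le> length Hs" using UZ(1) F(1,2) by blast
    then show "case x of (U, Z) \<Rightarrow> card U \<le> cochord {..<n} E" using F(3) Hs(1) by simp
  qed
  have "\<exists>D. stanley_decomp TYPE('k) n (edge_ideal n E) D \<and> (\<forall>(U, Z) \<in> set D. card U \<le> cochord {..<n} E)"
    using D(1) c by blast
  then show ?thesis unfolding sreg_def by (rule Least_le)
qed

end
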